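(* Let $X$ be a nonempty set and let $S$ be a regular semigroup together with a one-to-one mapping $\phi:X\to E(S)$ such that $S$ has no proper regular subsemigroup containing $X\phi$. Then there is a surjective semigroup homomorphism $\psi:FT(X)\to S$ with $[x]\psi=x\phi$ for all $x\in X$.
   Context: Let $1$ be a symbol not in $X$. Elements of height $\ge 2$ are triples $g=(g^l,g^c,g^r)$. Set $\Gamma_0(X)=\{1\}$, $\Gamma_1(X)=X$, and identify each $x\in X$ with $(1,x,1)$ (so $x^l=x^r=1$). For $i\ge 2$, $\Gamma_i(X)$ is the set of triples $g\in\Gamma_{i-1}(X)\times\Gamma_{i-2}(X)\times\Gamma_{i-1}(X)$ with $g^l\neq g^r$ and $g^c\in\{(g^l)^l,(g^l)^r\}\cap\{(g^r)^l,(g^r)^r\}$. Let $\Gamma(X)=\bigcup_{i\ge0}\Gamma_i(X)$ (height of $g$ = the $i$ with $g\in\Gamma_i(X)$). Let $\rho$ be the smallest congruence on the free semigroup $\Gamma(X)^+$ containing $(1g,g),(g1,g),(gg,g)$ for all $g\in\Gamma(X)$, and $(g^cg^lg,g)$, $(gg^rg^c,g)$, $(g^rg^cgg^cg^l,\,g^rg^cg^l)$ for all $g$ of height $\ge2$. $FT^1(X)=\Gamma(X)^+/\rho$ with $[u]$ the class of $u$, and $FT(X)=FT^1(X)\setminus\{[1]\}$. $E(S)$ denotes the set of idempotents of $S$. *)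

theory Defs
  imports Main
begin

text \<open>Elements of Gamma(X): the symbol 1 (One), elements x of X (Leaf x, identified
with (1,x,1)), and triples g = (g^l, g^c, g^r) (Tri).\<close>

datatype 'a gam = One | Leaf 'a | Tri "'a gam" "'a gam" "'a gam"

fun gl :: "'a gam \<Rightarrow> 'a gam" where
  "gl One = One" | "gl (Leaf x) = One" | "gl (Tri l c r) = l"

fun gc :: "'a gam \<Rightarrow> 'a gam" where
  "gc One = One" | "gc (Leaf x) = Leaf x" | "gc (Tri l c r) = c"

fun gr :: "'a gam \<Rightarrow> 'a gam" where
  "gr One = One" | "gr (Leaf x) = One" | "gr (Tri l c r) = r"

fun Gamma :: "'a set \<Rightarrow> nat \<Rightarrow> 'a gam set" where
  "Gamma X 0 = {One}"
| "Gamma X (Suc 0) = Leaf ` X"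
| "Gamma X (Suc (Suc i)) =
     {Tri l c r | l c r. l \<in> Gamma X (Suc i) \<and> c \<in> Gamma X i \<and> r \<in> Gamma X (Suc i)
        \<and> l \<noteq> r \<and> c \<in> {gl l, gr l} \<inter> {gl r, gr r}}"

definition Gam :: "'a set \<Rightarrow> 'a gam set" where
  "Gam X = (\<Union>i. Gamma X i)"

definition Gam2 :: "'a set \<Rightarrow> 'a gam set" where
  "Gam2 X = (\<Union>i\<in>{2..}. Gamma X i)"

definition Gplus :: "'a set \<Rightarrow> 'a gam list set" where
  "Gplus X = {u. u \<noteq> [] \<and> set u \<subseteq> Gam X}"

inductive rho :: "'a set \<Rightarrow> 'a gam list \<Rightarrow> 'a gam list \<Rightarrow> bool" for X where
  gen1: "g \<in> Gam X \<Longrightarrow> rho X [One, g] [g]"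
| gen2: "g \<in> Gam X \<Longrightarrow> rho X [g, One] [g]"
| gen3: "g \<in> Gam X \<Longrightarrow> rho X [g, g] [g]"
| gen4: "g \<in> Gam2 X \<Longrightarrow> rho X [gc g, gl g, g] [g]"
| gen5: "g \<in> Gam2 X \<Longrightarrow> rho X [g, gr g, gc g] [g]"
| gen6: "g \<in> Gam2 X \<Longrightarrow> rho X [gr g, gc g, g, gc g, gl g] [gr g, gc g, gl g]"
| refl: "u \<in> Gplus X \<Longrightarrow> rho X u u"
| sym: "rho X u v \<Longrightarrow> rho X v u"
| trans: "rho X u v \<Longrightarrow> rho X v w \<Longrightarrow> rho X u w"
| left: "rho X u v \<Longrightarrow> w \<in> Gplus X \<Longrightarrow> rho X (w @ u) (w @ v)"
| right: "rho X u v \<Longrightarrow> w \<in> Gplus X \<Longrightarrow> rho X (u @ w) (v @ w)"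

definition cls :: "'a set \<Rightarrow> 'a gam list \<Rightarrow> 'a gam list set" where
  "cls X u = {v \<in> Gplus X. rho X u v}"

definition FT1 :: "'a set \<Rightarrow> 'a gam list set set" where
  "FT1 X = cls X ` Gplus X"

definition FT :: "'a set \<Rightarrow> 'a gam list set set" where
  "FT X = FT1 X - {cls X [One]}"

text \<open>Multiplication of classes: [u][v] = [uv] (well defined since rho is a congruence).\<close>

definition ft_mult :: "'a set \<Rightarrow> 'a gam list set \<Rightarrow> 'a gam list set \<Rightarrow> 'a gam list set" where
  "ft_mult X A B = cls X ((SOME u. u \<in> A) @ (SOME v. v \<in> B))"

definition idempotents :: "'s::semigroup_mult set" where
  "idempotents = {e. e * e = e}"

definition regular_subsemigroup :: "'s::semigroup_mult set \<Rightarrow> bool" where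
  "regular_subsemigroup T \<longleftrightarrow> T \<noteq> {} \<and> (\<forall>a\<in>T. \<forall>b\<in>T. a * b \<in> T)
      \<and> (\<forall>a\<in>T. \<exists>b\<in>T. a * b * a = a)"

definition regular_semigroup :: "'s::semigroup_mult itself \<Rightarrow> bool" where
  "regular_semigroup _ \<longleftrightarrow> (\<forall>a::'s. \<exists>b. a * b * a = a)"

end

theory Submission
  imports Defs
begin


instantiation option :: (semigroup_mult) monoid_mult
begin
definition one_option_def: "1 = None"
definition times_option_def: "x * y = (case x of None \<Rightarrow> y | Some a \<Rightarrow> (case y of None \<Rightarrow> Some a | Some b \<Rightarrow> Some (a * b)))"
instance
  by standard (auto simp: one_option_def times_option_def mult.assoc split: option.splits)
end

lemma times_option_simps[simp]:
  "None * y = y" "x * None = x" "Some a * Some b = Some (a * b)"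
  by (auto simp: times_option_def split: option.splits)

lemma one_option_None[simp]: "(1::'s::semigroup_mult option) = None"
  by (simp add: one_option_def)



fun hgt :: "'a gam \<Rightarrow> nat" where
  "hgt One = 0" | "hgt (Leaf x) = 1" | "hgt (Tri l c r) = Suc (hgt l)"

lemma hgt_Gamma: "g \<in> Gamma X i \<Longrightarrow> hgt g = i"
  by (induction X i arbitrary: g rule: Gamma.induct) auto

lemma Gamma_children: "g \<in> Gamma X (Suc i) \<Longrightarrow> gl g \<in> Gamma X i \<and> gr g \<in> Gamma X i"
  by (cases i) auto

lemma Gam_iff: "g \<in> Gam X \<longleftrightarrow> g \<in> Gamma X (hgt g)"
  unfolding Gam_def using hgt_Gamma by blast

lemma One_Gam[simp]: "One \<in> Gam X"
  unfolding Gam_def by (auto intro: exI[of _ 0])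

lemma Leaf_Gam[simp]: "x \<in> X \<Longrightarrow> Leaf x \<in> Gam X"
  unfolding Gam_def by (auto intro!: exI[of _ 1])

lemma Gamma_Gam: "g \<in> Gamma X i \<Longrightarrow> g \<in> Gam X"
  unfolding Gam_def by auto

lemma Gam2_D:
  assumes "g \<in> Gam2 X"
  shows "\<exists>l c r i. g = Tri l c r \<and> l \<in> Gamma X (Suc i) \<and> c \<in> Gamma X i \<and> r \<in> Gamma X (Suc i)
     \<and> l \<noteq> r \<and> c \<in> {gl l, gr l} \<and> c \<in> {gl r, gr r}"
proof -
  obtain j where j: "j \<ge> 2" "g \<in> Gamma X j" using assms unfolding Gam2_def by auto
  then obtain i where "j = Suc (Suc i)" by (metis add_2_eq_Suc le_Suc_ex)
  with j show ?thesis by auto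
qed

lemma sandwich_alg:
  fixes c l r y :: "'m::monoid_mult"
  assumes cc: "c*c = c" and lcl: "l*c*l = l" and rcr: "r*c*r = r"
    and y1: "(r*c*l)*y*(r*c*l) = r*c*l" and y2: "y*(r*c*l)*y = y"
  defines "h \<equiv> c*l*y*(r*c)"
  shows "h*h = h" "c*l*h = h" "h*r*c = h" "r*c*h*c*l = r*c*l" "h*l*h = h" "h*r*h = h"
proof -
  have cc': "c*(c*x) = c*x" for x using cc by (simp add: mult.assoc[symmetric])
  have lcl': "l*(c*(l*x)) = l*x" for x using lcl by (simp add: mult.assoc[symmetric])
  have rcr': "r*(c*(r*x)) = r*x" for x using rcr by (simp add: mult.assoc[symmetric])
  have lcl2: "l*(c*l) = l" using lcl by (simp add: mult.assoc[symmetric])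
  have rcr2: "r*(c*r) = r" using rcr by (simp add: mult.assoc[symmetric])
  have z1: "r*(c*(l*(y*(r*(c*l))))) = r*(c*l)" using y1 by (simp add: mult.assoc[symmetric])
  have z1': "r*(c*(l*(y*(r*(c*(l*x)))))) = r*(c*(l*x))" for x using y1 by (simp add: mult.assoc[symmetric])
  have z2: "y*(r*(c*(l*y))) = y" using y2 by (simp add: mult.assoc[symmetric])
  have z2': "y*(r*(c*(l*(y*x)))) = y*x" for x using y2 by (simp add: mult.assoc[symmetric])
  note rules = cc' lcl' rcr' lcl2 rcr2 z1 z1' z2 z2' cc
  show "h*h = h" unfolding h_def by (simp add: mult.assoc rules)
  show "c*l*h = h" unfolding h_def by (simp add: mult.assoc rules)
  show "h*r*c = h" unfolding h_def by (simp add: mult.assoc rules)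
  show "r*c*h*c*l = r*c*l" unfolding h_def by (simp add: mult.assoc rules)
  show "h*l*h = h" unfolding h_def by (simp add: mult.assoc rules)
  show "h*r*h = h" unfolding h_def by (simp add: mult.assoc rules)
qed

fun fv :: "('a \<Rightarrow> 's::semigroup_mult) \<Rightarrow> 'a gam \<Rightarrow> 's option" where
  "fv \<phi> One = 1"
| "fv \<phi> (Leaf x) = Some (\<phi> x)"
| "fv \<phi> (Tri l c r) = (let z = fv \<phi> r * fv \<phi> c * fv \<phi> l in
      fv \<phi> c * fv \<phi> l * (SOME y. z*y*z = z \<and> y*z*y = y) * (fv \<phi> r * fv \<phi> c))"

locale ctx =
  fixes X :: "'a set" and \<phi> :: "'a \<Rightarrow> 's::semigroup_mult"
  assumes reg: "regular_semigroup TYPE('s)" and idem: "\<phi> ` X \<subseteq> idempotents"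
begin

abbreviation f where "f \<equiv> fv \<phi>"

lemma opt_inv: "\<exists>y. (m::'s option)*y*m = m \<and> y*m*y = y"
proof (cases m)
  case None then show ?thesis by auto
next
  case (Some a)
  obtain b where b: "a*b*a = a" using reg unfolding regular_semigroup_def by blast
  have "a*(b*a*b)*a = a" "(b*a*b)*a*(b*a*b) = b*a*b"
    using b by (metis mult.assoc)+
  then show ?thesis using Some by (intro exI[of _ "Some (b*a*b)"]) simp
qed

lemma notNone: "x \<noteq> None \<Longrightarrow> y * x \<noteq> None" "x \<noteq> None \<Longrightarrow> x * y \<noteq> None"
  by (cases x; cases y; auto)+

lemma inv:
  "g \<in> Gamma X i \<Longrightarrow> f g * f g = f g \<and> f g * f (gl g) * f g = f g \<and> f g * f (gr g) * f g = f g
     \<and> (g \<noteq> One \<longrightarrow> f g \<noteq> None)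
     \<and> (\<forall>l c r. g = Tri l c r \<longrightarrow> f c * f l * f g = f g \<and> f g * f r * f c = f g
          \<and> f r * f c * f g * f c * f l = f r * f c * f l)"
proof (induction i arbitrary: g rule: less_induct)
  case (less i)
  consider "i = 0" | "i = 1" | j where "i = Suc (Suc j)"
    by (metis One_nat_def not0_implies_Suc)
  then show ?case
  proof cases
    case 1
    then show ?thesis using less.prems by simp
  next
    case 2
    then obtain x where "x \<in> X" "g = Leaf x" using less.prems by auto
    with idem show ?thesis by (auto simp: idempotents_def image_subset_iff)
  next
    case 3
    then obtain l c r where g: "g = Tri l c r" and l: "l \<in> Gamma X (Suc j)" and c: "c \<in> Gamma X j"
      and r: "r \<in> Gamma X (Suc j)" and cl: "c \<in> {gl l, gr l}" and cr: "c \<in> {gl r, gr r}"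
      using less.prems by auto
    have lt: "Suc j < i" "j < i" using 3 by auto
    note IHl = less.IH[OF lt(1) l] and IHr = less.IH[OF lt(1) r] and IHc = less.IH[OF lt(2) c]
    have cc: "f c * f c = f c" using IHc by blast
    have lcl: "f l * f c * f l = f l" using IHl cl by auto
    have rcr: "f r * f c * f r = f r" using IHr cr by auto
    have lnn: "f l \<noteq> None" using IHl l hgt_Gamma[OF l] by auto
    define z where "z = f r * f c * f l"
    define y where "y = (SOME y. z*y*z = z \<and> y*z*y = y)"
    have y: "z*y*z = z \<and> y*z*y = y" unfolding y_def by (rule someI_ex[OF opt_inv])
    have fg: "f g = f c * f l * y * (f r * f c)"
      unfolding g y_def z_def by (simp add: Let_def)
    note S = sandwich_alg[OF cc lcl rcr, of y, folded z_def, OF y[THEN conjunct1] y[THEN conjunct2], folded fg]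
    have nn: "f g \<noteq> None" unfolding fg using lnn by (metis notNone)
    show ?thesis using S nn unfolding z_def by (auto simp: g simp del: fv.simps)
  qed
qed


lemma Gam_inv: "g \<in> Gam X \<Longrightarrow> f g * f g = f g \<and> f g * f (gl g) * f g = f g \<and> f g * f (gr g) * f g = f g
     \<and> (g \<noteq> One \<longrightarrow> f g \<noteq> None)
     \<and> (\<forall>l c r. g = Tri l c r \<longrightarrow> f c * f l * f g = f g \<and> f g * f r * f c = f g
          \<and> f r * f c * f g * f c * f l = f r * f c * f l)"
  using inv unfolding Gam_def by blast

lemma f_idem: "g \<in> Gam X \<Longrightarrow> f g * f g = f g" using Gam_inv by blast
lemma f_child: "g \<in> Gam X \<Longrightarrow> ch \<in> {gl g, gr g} \<Longrightarrow> f g * f ch * f g = f g" using Gam_inv by blast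
lemma f_nn: "g \<in> Gam X \<Longrightarrow> g \<noteq> One \<Longrightarrow> f g \<noteq> None" using Gam_inv by blast
lemma f_tri: "Tri l c r \<in> Gam X \<Longrightarrow> f c * f l * f (Tri l c r) = f (Tri l c r) \<and> f (Tri l c r) * f r * f c = f (Tri l c r)
          \<and> f r * f c * f (Tri l c r) * f c * f l = f r * f c * f l"
  using Gam_inv[of "Tri l c r"] by blast

definition F :: "'a gam list \<Rightarrow> 's option" where "F w = prod_list (map f w)"

lemma F_simps[simp]: "F [] = 1" "F (g # w) = f g * F w" "F (u @ v) = F u * F v"
  unfolding F_def by auto

definition T1 where "T1 = {F w | w. set w \<subseteq> Gam X}"

definition regT where "regT s \<longleftrightarrow> (\<exists>v\<in>T1. s * v * s = s)"

lemma rho_F: "rho X u v \<Longrightarrow> F u = F v"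
proof (induction rule: rho.induct)
  case (gen3 g)
  then show ?case using f_idem by simp
next
  case (gen4 g)
  then obtain l c r i where g: "g = Tri l c r" using Gam2_D by blast
  have "g \<in> Gam X" using gen4 unfolding Gam2_def Gam_def by auto
  then show ?case using f_tri[of l c r] g by (simp add: mult.assoc)
next
  case (gen5 g)
  then obtain l c r i where g: "g = Tri l c r" using Gam2_D by blast
  have "g \<in> Gam X" using gen5 unfolding Gam2_def Gam_def by auto
  then show ?case using f_tri[of l c r] g by (simp add: mult.assoc)
next
  case (gen6 g)
  then obtain l c r i where g: "g = Tri l c r" using Gam2_D by blast
  have "g \<in> Gam X" using gen6 unfolding Gam2_def Gam_def by auto
  then show ?case using f_tri[of l c r] g by (simp add: mult.assoc)
qed (simp_all add: mult.assoc)

lemma Gam2_Gam: "g \<in> Gam2 X \<Longrightarrow> g \<in> Gam X"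
  unfolding Gam2_def Gam_def by auto

lemma Gam2_children: "g \<in> Gam2 X \<Longrightarrow> gl g \<in> Gam X \<and> gc g \<in> Gam X \<and> gr g \<in> Gam X"
  using Gam2_D[of g X] Gamma_Gam by fastforce

lemma rho_Gplus: "rho X u v \<Longrightarrow> u \<in> Gplus X \<and> v \<in> Gplus X"
proof (induction rule: rho.induct)
  case (gen4 g)
  then show ?case using Gam2_Gam[OF gen4] Gam2_children[OF gen4] by (simp add: Gplus_def)
next
  case (gen5 g)
  then show ?case using Gam2_Gam[OF gen5] Gam2_children[OF gen5] by (simp add: Gplus_def)
next
  case (gen6 g)
  then show ?case using Gam2_Gam[OF gen6] Gam2_children[OF gen6] by (simp add: Gplus_def)
qed (auto simp: Gplus_def)

lemma all_One: "u \<in> Gplus X \<Longrightarrow> set u \<subseteq> {One} \<Longrightarrow> rho X u [One]"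
proof (induction u)
  case Nil then show ?case by (simp add: Gplus_def)
next
  case (Cons a u)
  show ?case
  proof (cases "u = []")
    case True then show ?thesis using Cons by (auto intro: rho.refl simp: Gplus_def)
  next
    case False
    then have "rho X u [One]" using Cons by (auto simp: Gplus_def)
    then have "rho X ([One] @ u) ([One] @ [One])" by (rule rho.left) (simp add: Gplus_def)
    moreover have "rho X [One, One] [One]" by (rule rho.gen3) simp
    ultimately show ?thesis using Cons by (auto intro: rho.trans)
  qed
qed

lemma F_None: "set u \<subseteq> Gam X \<Longrightarrow> F u = None \<Longrightarrow> set u \<subseteq> {One}"
proof (induction u)
  case (Cons a u)
  have "f a * F u = None" using Cons by simp
  then have "f a = None" "F u = None" by (cases "f a"; cases "F u"; auto)+
  then show ?case using Cons f_nn[of a] by auto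
qed simp

lemma cls_eq: "rho X u v \<Longrightarrow> cls X u = cls X v"
  unfolding cls_def by (auto intro: rho.trans rho.sym)

definition psi :: "'a gam list set \<Rightarrow> 's" where "psi A = the (F (SOME u. u \<in> A))"

lemma cls_props: "u \<in> Gplus X \<Longrightarrow> F u \<noteq> None \<Longrightarrow> cls X u \<in> FT X \<and> psi (cls X u) = the (F u)"
proof -
  assume u: "u \<in> Gplus X" and nn: "F u \<noteq> None"
  have uin: "u \<in> cls X u" using u unfolding cls_def by (auto intro: rho.refl)
  have "cls X u \<noteq> cls X [One]"
  proof
    assume "cls X u = cls X [One]"
    then have "rho X [One] u" using uin unfolding cls_def by auto
    then have "F u = F [One]" using rho_F by metis
    then show False using nn by simp
  qed
  then have "cls X u \<in> FT X" using u unfolding FT_def FT1_def by auto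
  moreover have "(SOME v. v \<in> cls X u) \<in> cls X u" using uin by (rule someI)
  then have "F (SOME v. v \<in> cls X u) = F u" using rho_F unfolding cls_def by auto
  ultimately show ?thesis unfolding psi_def by simp
qed

lemma FT_elim: "A \<in> FT X \<Longrightarrow> \<exists>u \<in> Gplus X. A = cls X u \<and> F u \<noteq> None"
proof -
  assume A: "A \<in> FT X"
  then obtain u where u: "u \<in> Gplus X" "A = cls X u" and ne: "A \<noteq> cls X [One]"
    unfolding FT_def FT1_def by auto
  have "F u \<noteq> None"
  proof
    assume "F u = None"
    then have "set u \<subseteq> {One}" using F_None u unfolding Gplus_def by auto
    then have "rho X u [One]" using all_One u by auto
    then have "cls X u = cls X [One]" by (rule cls_eq)
    then show False using ne u by simp
  qed
  then show ?thesis using u by auto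
qed

lemma some_in: "A \<in> FT X \<Longrightarrow> (SOME v. v \<in> A) \<in> Gplus X \<and> F (SOME v. v \<in> A) \<noteq> None
   \<and> A = cls X (SOME v. v \<in> A)"
proof -
  assume "A \<in> FT X"
  then obtain u where u: "u \<in> Gplus X" "A = cls X u" "F u \<noteq> None" using FT_elim by blast
  have uin: "u \<in> A" using u unfolding cls_def by (auto intro: rho.refl)
  then have s: "(SOME v. v \<in> A) \<in> A" by (rule someI)
  then have r: "rho X u (SOME v. v \<in> A)" using u unfolding cls_def by auto
  have "(SOME v. v \<in> A) \<in> Gplus X" using s u unfolding cls_def by auto
  moreover have "F (SOME v. v \<in> A) \<noteq> None" using rho_F[OF r] u by simp
  moreover have "A = cls X (SOME v. v \<in> A)" using cls_eq[OF r] u by simp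
  ultimately show ?thesis by blast
qed

lemma hom: "A \<in> FT X \<Longrightarrow> B \<in> FT X \<Longrightarrow> ft_mult X A B \<in> FT X \<and> psi (ft_mult X A B) = psi A * psi B"
proof -
  assume A: "A \<in> FT X" and B: "B \<in> FT X"
  define a where "a = (SOME v. v \<in> A)"
  define b where "b = (SOME v. v \<in> B)"
  have a: "a \<in> Gplus X" "F a \<noteq> None" "A = cls X a" using some_in[OF A] unfolding a_def by auto
  have b: "b \<in> Gplus X" "F b \<noteq> None" "B = cls X b" using some_in[OF B] unfolding b_def by auto
  have ab: "a @ b \<in> Gplus X" using a b unfolding Gplus_def by auto
  have nn: "F (a @ b) \<noteq> None" using a(2) by (simp add: notNone)
  have fm: "ft_mult X A B = cls X (a @ b)" unfolding ft_mult_def a_def b_def ..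
  obtain x y where xy: "F a = Some x" "F b = Some y" using a(2) b(2) by auto
  show ?thesis using cls_props[OF ab nn] cls_props[OF a(1,2)] cls_props[OF b(1,2)] a(3) b(3) fm xy
    by simp
qed

end



fun lift :: "'a gam list \<Rightarrow> 'a gam list" where
  "lift (y # c # y' # []) = [Tri y' c y]"
| "lift (y # c # y' # c' # w) = Tri y' c y # y' # lift (y' # c' # w)"
| "lift _ = []"

lemma Gam_children: "y \<in> Gam X \<Longrightarrow> gl y \<in> Gam X \<and> gr y \<in> Gam X"
proof -
  assume "y \<in> Gam X"
  then have y: "y \<in> Gamma X (hgt y)" by (simp add: Gam_iff)
  show ?thesis
  proof (cases "hgt y")
    case 0 then show ?thesis using y by auto
  next
    case (Suc i) then show ?thesis using Gamma_children[of y X i] y Gamma_Gam by auto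
  qed
qed

lemma tri_Gam: "Tri l c r \<in> Gam X \<Longrightarrow> \<exists>i. l \<in> Gamma X (Suc i) \<and> c \<in> Gamma X i \<and> r \<in> Gamma X (Suc i)
   \<and> l \<noteq> r \<and> c \<in> {gl l, gr l} \<and> c \<in> {gl r, gr r} \<and> Tri l c r \<in> Gamma X (Suc (Suc i))"
proof -
  assume a: "Tri l c r \<in> Gam X"
  then have m: "Tri l c r \<in> Gamma X (hgt (Tri l c r))" using Gam_iff by blast
  then have m: "Tri l c r \<in> Gamma X (Suc (hgt l))" by simp
  show ?thesis
  proof (cases "hgt l")
    case 0 then show ?thesis using m by auto
  next
    case (Suc i) then show ?thesis using m by auto
  qed
qed

lemma Gamma_SS: "g \<in> Gamma X (Suc (Suc i)) \<Longrightarrow> \<exists>l c r. g = Tri l c r \<and> l \<in> Gamma X (Suc i) \<and> c \<in> Gamma X i \<and> r \<in> Gamma X (Suc i)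
   \<and> l \<noteq> r \<and> c \<in> {gl l, gr l} \<and> c \<in> {gl r, gr r}"
  by auto

lemma hgt_pos: "g \<in> Gam X \<Longrightarrow> g \<noteq> One \<Longrightarrow> hgt g \<ge> 1"
  using Gam_iff[of g X] by (cases g) auto

context ctx
begin

lemma T1_f: "g \<in> Gam X \<Longrightarrow> f g \<in> T1"
  unfolding T1_def by (rule CollectI, rule exI[of _ "[g]"]) simp

lemma T1_mult: "a \<in> T1 \<Longrightarrow> b \<in> T1 \<Longrightarrow> a * b \<in> T1"
proof -
  assume "a \<in> T1" "b \<in> T1"
  then obtain u v where "a = F u" "b = F v" "set u \<subseteq> Gam X" "set v \<subseteq> Gam X" unfolding T1_def by auto
  then show ?thesis unfolding T1_def by (auto intro!: exI[of _ "u @ v"])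
qed

lemma tri_ids:
  assumes "Tri l c r \<in> Gam X"
  shows "f (Tri l c r) * f c * f l = f (Tri l c r) * f l"
    and "f r * f c * f (Tri l c r) = f r * f (Tri l c r)"
    and "f (Tri l c r) * f r * f c = f (Tri l c r)"
    and "f c * f l * f (Tri l c r) = f (Tri l c r)"
    and "f r * f c * f (Tri l c r) * f c * f l = f r * f c * f l"
proof -
  obtain i where c: "c \<in> Gamma X i" using tri_Gam[OF assms] by blast
  have cc: "f c * f c = f c" using f_idem[OF Gamma_Gam[OF c]] .
  note t = f_tri[OF assms]
  show "f (Tri l c r) * f c * f l = f (Tri l c r) * f l"
    by (metis t cc mult.assoc)
  show "f r * f c * f (Tri l c r) = f r * f (Tri l c r)"
    by (metis t cc mult.assoc)
  show "f (Tri l c r) * f r * f c = f (Tri l c r)" using t by blast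
  show "f c * f l * f (Tri l c r) = f (Tri l c r)" using t by blast
  show "f r * f c * f (Tri l c r) * f c * f l = f r * f c * f l" using t by blast
qed

inductive zig :: "nat \<Rightarrow> 'a gam list \<Rightarrow> bool" where
  single: "y \<in> Gamma X k \<Longrightarrow> zig k [y]"
| cons: "y \<in> Gamma X k \<Longrightarrow> zig k (y' # w) \<Longrightarrow> y \<noteq> y' \<Longrightarrow> c \<in> {gl y, gr y} \<Longrightarrow> c \<in> {gl y', gr y'}
     \<Longrightarrow> zig k (y # c # y' # w)"

lemma zig_basic: "zig k w \<Longrightarrow> w \<noteq> [] \<and> set w \<subseteq> Gam X \<and> hd w \<in> Gamma X k \<and> last w \<in> Gamma X k
   \<and> f (hd w) * F w = F w \<and> F w * f (last w) = F w"
proof (induction rule: zig.induct)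
  case (single y k)
  then show ?case using f_idem[OF Gamma_Gam[OF single]] Gamma_Gam by simp
next
  case (cons y k y' w c)
  have yG: "y \<in> Gam X" using cons Gamma_Gam by blast
  have "c \<in> Gam X" using Gam_children[OF yG] cons by auto
  moreover have "f y * (f y * (f c * F (y' # w))) = f y * (f c * F (y' # w))"
    using f_idem[OF yG] by (metis mult.assoc)
  moreover have "f y * (f c * F (y' # w)) * f (last (y' # w)) = f y * (f c * F (y' # w))"
    using cons.IH by (simp add: mult.assoc)
  ultimately show ?case using cons yG by simp
qed


lemma zig_Gamma_k: "y \<in> Gamma X k \<Longrightarrow> y' \<in> Gamma X k \<Longrightarrow> y \<noteq> y' \<Longrightarrow> \<exists>i. k = Suc i"
  by (cases k) auto

lemma tri_in: "y \<in> Gamma X (Suc i) \<Longrightarrow> y' \<in> Gamma X (Suc i) \<Longrightarrow> y \<noteq> y' \<Longrightarrow> c \<in> {gl y, gr y} \<Longrightarrow> c \<in> {gl y', gr y'}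
   \<Longrightarrow> Tri y' c y \<in> Gamma X (Suc (Suc i))"
  using Gamma_children[of y X i] by auto

lemma lift_props: "zig k v \<Longrightarrow> length v \<ge> 3 \<Longrightarrow> zig (Suc k) (lift v) \<and> length (lift v) < length v
   \<and> hd (lift v) = Tri (v!2) (v!1) (v!0)
   \<and> (\<exists>cp yp. last (lift v) = Tri (last v) cp yp \<and> F v = f (v!0) * f (v!1) * F (lift v) * f cp * f (last v))"
proof (induction v rule: lift.induct)
  case (1 y c y')
  from "1.prems"(1) have y: "y \<in> Gamma X k" and y': "y' \<in> Gamma X k" and ne: "y \<noteq> y'"
    and cy: "c \<in> {gl y, gr y}" and cy': "c \<in> {gl y', gr y'}"
    by (auto elim: zig.cases)
  obtain i where k: "k = Suc i" using zig_Gamma_k[OF y y' ne] by blast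
  have tG: "Tri y' c y \<in> Gamma X (Suc k)" using tri_in[of y i y' c] y y' ne cy cy' k by simp
  have "f y * f c * f (Tri y' c y) * f c * f y' = f y * f c * f y'"
    using tri_ids(5)[OF Gamma_Gam[OF tG]] .
  then have "F [y, c, y'] = f y * f c * F [Tri y' c y] * f c * f y'" by (simp add: mult.assoc)
  then show ?case using tG by (auto intro: zig.single)
next
  case (2 y c y' c' w)
  from "2.prems"(1) have y: "y \<in> Gamma X k" and z': "zig k (y' # c' # w)" and ne: "y \<noteq> y'"
    and cy: "c \<in> {gl y, gr y}" and cy': "c \<in> {gl y', gr y'}"
    by (auto elim: zig.cases)
  have y': "y' \<in> Gamma X k" using zig_basic[OF z'] by simp
  from z' obtain y'' w'' where w: "w = y'' # w''" and zz: "zig k (y'' # w'')" and ne': "y' \<noteq> y''"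
    and c'1: "c' \<in> {gl y', gr y'}" and c'2: "c' \<in> {gl y'', gr y''}"
    by (cases rule: zig.cases) auto
  have IH: "zig (Suc k) (lift (y' # c' # w)) \<and> length (lift (y' # c' # w)) < length (y' # c' # w)
   \<and> hd (lift (y' # c' # w)) = Tri y'' c' y'
   \<and> (\<exists>cp yp. last (lift (y' # c' # w)) = Tri (last (y' # c' # w)) cp yp \<and> F (y' # c' # w) = f y' * f c' * F (lift (y' # c' # w)) * f cp * f (last (y' # c' # w)))"
    using "2.IH"[OF z'] w by simp
  define L' where "L' = lift (y' # c' # w)"
  obtain i where k: "k = Suc i" using zig_Gamma_k[OF y y' ne] by blast
  have tG: "Tri y' c y \<in> Gamma X (Suc k)" using tri_in[of y i y' c] y y' ne cy cy' k by simp
  have zL: "zig (Suc k) L'" using IH L'_def by simp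
  then have L'ne: "L' \<noteq> []" using zig_basic by blast
  have hdL: "hd L' = Tri y'' c' y'" using IH L'_def by simp
  have t'G: "Tri y'' c' y' \<in> Gam X" using zig_basic[OF zL] hdL Gamma_Gam by metis
  have zL2: "zig (Suc k) (Tri y'' c' y' # tl L')" using zL L'ne hdL by (metis list.collapse)
  have lift_eq: "lift (y # c # y' # c' # w) = Tri y' c y # y' # L'" unfolding L'_def by simp
  have zig_new: "zig (Suc k) (lift (y # c # y' # c' # w))"
  proof -
    have "Tri y' c y \<noteq> Tri y'' c' y'" using ne by simp
    moreover have "y' \<in> {gl (Tri y' c y), gr (Tri y' c y)}" by simp
    moreover have "y' \<in> {gl (Tri y'' c' y'), gr (Tri y'' c' y')}" by simp
    ultimately have "zig (Suc k) (Tri y' c y # y' # Tri y'' c' y' # tl L')" using zig.cons[OF tG zL2] by blast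
    then show ?thesis unfolding lift_eq using L'ne hdL by (metis list.collapse)
  qed
  obtain cp yp where cpyp: "last L' = Tri (last (y' # c' # w)) cp yp"
     "F (y' # c' # w) = f y' * f c' * F L' * f cp * f (last (y' # c' # w))"
    using IH L'_def by blast
  have FL: "f (Tri y'' c' y') * F L' = F L'" using zig_basic[OF zL] hdL by simp
  have k1: "f y' * (f c' * (F L' * Z)) = f y' * (F L' * Z)" for Z
  proof -
    have "f y' * (f c' * (F L' * Z)) = f y' * f c' * f (Tri y'' c' y') * F L' * Z" using FL by (simp add: mult.assoc)
    also have "\<dots> = f y' * f (Tri y'' c' y') * F L' * Z" using tri_ids(2)[OF t'G] by simp
    also have "\<dots> = f y' * (F L' * Z)" using FL by (simp add: mult.assoc)
    finally show ?thesis .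
  qed
  have k2: "f y * (f c * (f y' * Z)) = f y * (f c * (f (Tri y' c y) * (f y' * Z)))" for Z
  proof -
    have "f y * (f c * (f y' * Z)) = f y * f c * f (Tri y' c y) * f c * f y' * Z"
      using tri_ids(5)[OF Gamma_Gam[OF tG]] by (simp add: mult.assoc)
    also have "\<dots> = f y * f c * (f (Tri y' c y) * f c * f y') * Z" by (simp add: mult.assoc)
    also have "\<dots> = f y * f c * (f (Tri y' c y) * f y') * Z" using tri_ids(1)[OF Gamma_Gam[OF tG]] by simp
    finally show ?thesis by (simp add: mult.assoc)
  qed
  have "F (y # c # y' # c' # w) = f y * (f c * F (y' # c' # w))" by (simp only: F_simps)
  also have "\<dots> = f y * (f c * (f y' * (f c' * (F L' * (f cp * f (last (y' # c' # w)))))))"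
    unfolding cpyp(2) by (simp only: mult.assoc)
  also have "\<dots> = f y * (f c * (f y' * (F L' * (f cp * f (last (y' # c' # w))))))"
    by (simp only: k1)
  also have "\<dots> = f y * (f c * (f (Tri y' c y) * (f y' * (F L' * (f cp * f (last (y' # c' # w)))))))"
    by (rule k2)
  also have "\<dots> = f y * f c * F (lift (y # c # y' # c' # w)) * f cp * f (last (y # c # y' # c' # w))"
    unfolding lift_eq by (simp add: mult.assoc)
  finally have "F (y # c # y' # c' # w) = f y * f c * F (lift (y # c # y' # c' # w)) * f cp * f (last (y # c # y' # c' # w))" .
  moreover have "last (lift (y # c # y' # c' # w)) = Tri (last (y # c # y' # c' # w)) cp yp"
    unfolding lift_eq using cpyp(1) L'ne by simp
  moreover have "length (lift (y # c # y' # c' # w)) < length (y # c # y' # c' # w)"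
    unfolding lift_eq using IH L'_def by simp
  ultimately show ?case using zig_new lift_eq by auto
qed auto


lemma absL: "regT s \<Longrightarrow> p * s = s \<Longrightarrow> p * e * p = p \<Longrightarrow> p \<in> T1 \<Longrightarrow> regT (e * s)"
proof -
  assume r: "regT s" and ps: "p * s = s" and pep: "p * e * p = p" and p: "p \<in> T1"
  obtain v where v: "v \<in> T1" "s * v * s = s" using r unfolding regT_def by blast
  have "p * e * s = s" using ps pep by (metis mult.assoc)
  then have "e * s * (v * p) * (e * s) = e * (s * v * s)" by (simp add: mult.assoc)
  then have "e * s * (v * p) * (e * s) = e * s" using v by simp
  then show ?thesis unfolding regT_def using T1_mult[OF v(1) p] by blast
qed

lemma absR: "regT s \<Longrightarrow> s * q = s \<Longrightarrow> q * e * q = q \<Longrightarrow> q \<in> T1 \<Longrightarrow> regT (s * e)"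
proof -
  assume r: "regT s" and sq: "s * q = s" and qeq: "q * e * q = q" and q: "q \<in> T1"
  obtain v where v: "v \<in> T1" "s * v * s = s" using r unfolding regT_def by blast
  have "s * e * q = s" using sq qeq by (metis mult.assoc)
  then have h: "s * (e * (q * Z)) = s * Z" for Z by (metis mult.assoc)
  have "s * e * (q * v) * (s * e) = (s * v * s) * e" by (simp add: mult.assoc h)
  then have "s * e * (q * v) * (s * e) = s * e" using v by simp
  then show ?thesis unfolding regT_def using T1_mult[OF q v(1)] by blast
qed

definition GL where "GL L p \<longleftrightarrow> (\<forall>s. p * s = s \<longrightarrow> regT s \<longrightarrow> regT (L * s))"
definition GR where "GR R q \<longleftrightarrow> (\<forall>s. s * q = s \<longrightarrow> regT s \<longrightarrow> regT (s * R))"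

lemma GL_1: "GL 1 p" unfolding GL_def by simp
lemma GR_1: "GR 1 p" unfolding GR_def by simp

lemma GL_comp: "GL L p \<Longrightarrow> q * e * q = q \<Longrightarrow> p * e * q = e * q \<Longrightarrow> q \<in> T1 \<Longrightarrow> GL (L * e) q"
  unfolding GL_def
proof (intro allI impI)
  fix s assume G: "\<forall>s. p * s = s \<longrightarrow> regT s \<longrightarrow> regT (L * s)" and qeq: "q * e * q = q"
    and peq: "p * e * q = e * q" and q: "q \<in> T1" and qs: "q * s = s" and r: "regT s"
  have "regT (e * s)" using absL[OF r qs qeq q] .
  moreover have "p * (e * s) = e * s" using peq qs by (metis mult.assoc)
  ultimately have "regT (L * (e * s))" using G by blast
  then show "regT (L * e * s)" by (simp add: mult.assoc)
qed

lemma GR_comp: "GR R p \<Longrightarrow> q * e * q = q \<Longrightarrow> q * e * p = q * e \<Longrightarrow> q \<in> T1 \<Longrightarrow> GR (e * R) q"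
  unfolding GR_def
proof (intro allI impI)
  fix s assume G: "\<forall>s. s * p = s \<longrightarrow> regT s \<longrightarrow> regT (s * R)" and qeq: "q * e * q = q"
    and qep: "q * e * p = q * e" and q: "q \<in> T1" and sq: "s * q = s" and r: "regT s"
  have "regT (s * e)" using absR[OF r sq qeq q] .
  moreover have "s * e * p = s * e" using qep sq by (metis mult.assoc)
  ultimately have "regT (s * e * R)" using G by blast
  then show "regT (s * (e * R))" by (simp add: mult.assoc)
qed

lemma row_reg: "zig k w \<Longrightarrow> regT (F w)"
proof (induction "length w" arbitrary: k w rule: less_induct)
  case less
  show ?case
  proof (cases "length w \<ge> 3")
    case False
    then obtain y where w: "w = [y]" and y: "y \<in> Gamma X k" using less.prems by (auto elim: zig.cases)
    have yG: "y \<in> Gam X" using y Gamma_Gam by blast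
    have "f y * f y * f y = f y" using f_idem[OF yG] by simp
    then show ?thesis unfolding regT_def w using T1_f[OF yG] by auto
  next
    case True
    note LP = lift_props[OF less.prems True]
    define L where "L = lift w"
    have zL: "zig (Suc k) L" and lenL: "length L < length w" and hdL: "hd L = Tri (w!2) (w!1) (w!0)"
      using LP L_def by auto
    obtain cp yp where lastL: "last L = Tri (last w) cp yp" and Fw: "F w = f (w!0) * f (w!1) * F L * f cp * f (last w)"
      using LP L_def by blast
    have rL: "regT (F L)" using less.hyps[OF lenL zL] .
    note zb = zig_basic[OF zL]
    have t1G: "Tri (w!2) (w!1) (w!0) \<in> Gam X" using zb hdL Gamma_Gam by metis
    have tlG: "Tri (last w) cp yp \<in> Gam X" using zb lastL Gamma_Gam by metis
    have a1: "f (hd L) * (f (w!0) * f (w!1)) * f (hd L) = f (hd L)"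
      using tri_ids(3)[OF t1G] f_idem[OF t1G] hdL by (simp add: mult.assoc)
    have r1: "regT ((f (w!0) * f (w!1)) * F L)"
      using absL[OF rL _ a1] zb T1_f[OF t1G] hdL by simp
    have a2: "f (last L) * (f cp * f (last w)) * f (last L) = f (last L)"
      using tri_ids(4)[OF tlG] f_idem[OF tlG] lastL by (simp add: mult.assoc)
    have "(f (w!0) * f (w!1) * F L) * f (last L) = f (w!0) * f (w!1) * F L"
      using zb by (simp add: mult.assoc)
    then have "regT ((f (w!0) * f (w!1) * F L) * (f cp * f (last w)))"
      using absR[OF r1 _ a2] T1_f[OF tlG] lastL by simp
    then show ?thesis using Fw by (simp add: mult.assoc)
  qed
qed

definition zcons where "zcons g c w = (if g = hd w then w else g # c # w)"
definition zjoin where "zjoin w1 w2 = w1 @ tl w2"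

lemma zjoin: "zig k w1 \<Longrightarrow> zig k w2 \<Longrightarrow> last w1 = hd w2 \<Longrightarrow>
   zig k (zjoin w1 w2) \<and> F (zjoin w1 w2) = F w1 * F w2 \<and> hd (zjoin w1 w2) = hd w1 \<and> last (zjoin w1 w2) = last w2"
  unfolding zjoin_def
proof (induction rule: zig.induct)
  case (single y k)
  have "w2 \<noteq> []" using zig_basic[OF single.prems(1)] by blast
  then have e0: "hd w2 # tl w2 = w2" by (rule list.collapse)
  have "y = hd w2" using single.prems(2) by simp
  then have e: "[y] @ tl w2 = w2" using e0 by simp
  have "f y * F w2 = F w2" using zig_basic[OF single.prems(1)] single.prems(2) by simp
  then have "F ([y] @ tl w2) = F [y] * F w2" unfolding e by simp
  moreover have "hd ([y] @ tl w2) = hd [y]" by simp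
  moreover have "last ([y] @ tl w2) = last w2" unfolding e ..
  ultimately show ?case unfolding e using single.prems(1) by blast
next
  case (cons y k y' w c)
  have IH: "zig k ((y' # w) @ tl w2) \<and> F ((y' # w) @ tl w2) = F (y' # w) * F w2 \<and>
    hd ((y' # w) @ tl w2) = hd (y' # w) \<and> last ((y' # w) @ tl w2) = last w2"
    using cons by simp
  have "zig k (y # c # ((y' # w) @ tl w2))"
    using zig.cons[OF cons.hyps(1), of y' "w @ tl w2"] IH cons.hyps by simp
  then show ?case using IH by (simp add: mult.assoc)
qed

lemma zcons: "zig k w \<Longrightarrow> g \<in> Gamma X k \<Longrightarrow> c \<in> {gl g, gr g} \<Longrightarrow> c \<in> {gl (hd w), gr (hd w)} \<Longrightarrow>
   zig k (zcons g c w) \<and> hd (zcons g c w) = g \<and> last (zcons g c w) = last w \<and> F (zcons g c w) = f g * f c * F w"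
proof (cases "g = hd w")
  case True
  assume z: "zig k w" and g: "g \<in> Gamma X k" and c: "c \<in> {gl g, gr g}"
  have gG: "g \<in> Gam X" using g Gamma_Gam by blast
  have "f g * F w = F w" using zig_basic[OF z] True by simp
  moreover have "f g * f c * f g = f g" using f_child[OF gG c] .
  ultimately have "f g * f c * F w = F w" by (metis mult.assoc)
  then show ?thesis using True z unfolding zcons_def by simp
next
  case False
  assume z: "zig k w" and g: "g \<in> Gamma X k" and c: "c \<in> {gl g, gr g}" and c2: "c \<in> {gl (hd w), gr (hd w)}"
  have wne: "w \<noteq> []" using zig_basic[OF z] by blast
  have "zig k (g # c # hd w # tl w)" using zig.cons[OF g, of "hd w" "tl w" c] z wne False c c2 by simp
  then show ?thesis using False wne unfolding zcons_def by (simp add: mult.assoc)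
qed

lemma zsnoc: "zig k w \<Longrightarrow> g \<in> Gamma X k \<Longrightarrow> c \<in> {gl (last w), gr (last w)} \<Longrightarrow> c \<in> {gl g, gr g} \<Longrightarrow>
   \<exists>w'. zig k w' \<and> hd w' = hd w \<and> last w' = g \<and> F w' = F w * f c * f g"
proof -
  assume z: "zig k w" and g: "g \<in> Gamma X k" and c: "c \<in> {gl (last w), gr (last w)}" and c2: "c \<in> {gl g, gr g}"
  have lG: "last w \<in> Gamma X k" using zig_basic[OF z] by blast
  have "zig k [g]" using g by (rule zig.single)
  have z2: "zig k (zcons (last w) c [g])" and p: "hd (zcons (last w) c [g]) = last w" "last (zcons (last w) c [g]) = g"
    "F (zcons (last w) c [g]) = f (last w) * f c * f g"
    using zcons[OF \<open>zig k [g]\<close> lG c] c2 by auto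
  have "F w * (f (last w) * f c * f g) = F w * f c * f g"
    using zig_basic[OF z] by (metis mult.assoc)
  then show ?thesis using zjoin[OF z z2] p by (intro exI[of _ "zjoin w (zcons (last w) c [g])"]) auto
qed

lemma F_filter: "F (filter (\<lambda>x. x \<noteq> One) u) = F u"
  by (induction u) auto

end


declare fv.simps(3)[simp del]

context ctx
begin

lemma lift_simple: "zig k v \<Longrightarrow> length v \<ge> 3 \<Longrightarrow> zig (Suc k) (lift v) \<and> length (lift v) < length v
   \<and> hd (lift v) = Tri (v!2) (v!1) (hd v) \<and> (\<exists>cp yp. last (lift v) = Tri (last v) cp yp)
   \<and> F v = f (hd v) * F (lift v) * f (last v)"
proof -
  assume z: "zig k v" and len: "length v \<ge> 3"
  note LP = lift_props[OF z len]
  define L where "L = lift v"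
  have zL: "zig (Suc k) L" and hdL: "hd L = Tri (v!2) (v!1) (v!0)" using LP L_def by auto
  obtain cp yp where lastL: "last L = Tri (last v) cp yp" and Fv: "F v = f (v!0) * f (v!1) * F L * f cp * f (last v)"
    using LP L_def by blast
  note zb = zig_basic[OF zL]
  have t1G: "Tri (v!2) (v!1) (v!0) \<in> Gam X" using zb hdL Gamma_Gam by metis
  have tlG: "Tri (last v) cp yp \<in> Gam X" using zb lastL Gamma_Gam by metis
  have v0: "v!0 = hd v" using len by (cases v) auto
  have e1: "f (v!0) * f (v!1) * F L = f (v!0) * F L"
  proof -
    have "f (v!0) * f (v!1) * F L = f (v!0) * f (v!1) * f (hd L) * F L" using zb by (simp add: mult.assoc)
    also have "\<dots> = f (v!0) * f (hd L) * F L" using tri_ids(2)[OF t1G] hdL by simp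
    also have "\<dots> = f (v!0) * F L" using zb by (simp add: mult.assoc)
    finally show ?thesis .
  qed
  have e2: "F L * f cp * f (last v) = F L * f (last v)"
  proof -
    have FLl: "F L * f (last L) = F L" using zb by blast
    have "F L * f cp * f (last v) = F L * (f (last L) * f cp * f (last v))" by (simp add: mult.assoc[symmetric] FLl)
    also have "\<dots> = F L * (f (last L) * f (last v))" using tri_ids(1)[OF tlG] lastL by simp
    also have "\<dots> = F L * f (last v)" by (simp add: mult.assoc[symmetric] FLl)
    finally show ?thesis .
  qed
  have "F v = f (v!0) * f (v!1) * F L * f cp * f (last v)" by (rule Fv)
  also have "\<dots> = f (v!0) * (F L * f cp * f (last v))" using e1 by (simp add: mult.assoc)
  also have "\<dots> = f (v!0) * F L * f (last v)" using e2 by (simp add: mult.assoc)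
  finally show ?thesis using LP L_def v0 lastL by auto
qed

lemma zig_short: "zig k w \<Longrightarrow> \<not> length w \<ge> 3 \<Longrightarrow> w = [hd w]"
  by (auto elim: zig.cases)

definition wd :: "nat \<Rightarrow> 'a gam list \<Rightarrow> bool" where
  "wd K u \<longleftrightarrow> u \<noteq> [] \<and> set u \<subseteq> Gam X - {One} \<and> (\<forall>g\<in>set u. hgt g \<le> K) \<and> (\<exists>g\<in>set u. hgt g = K)"

definition Gen :: "nat \<Rightarrow> bool" where
  "Gen K \<longleftrightarrow> (\<forall>u. wd K u \<longrightarrow> (\<exists>L w R. zig K w \<and> F u = L * F w * R \<and> GL L (f (hd w)) \<and> GR R (f (last w))
      \<and> (hgt (hd u) = K \<longrightarrow> L = 1 \<and> hd w = hd u) \<and> (hgt (last u) = K \<longrightarrow> R = 1 \<and> last w = last u)))"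

lemma Gam_hgt: "g \<in> Gam X \<Longrightarrow> hgt g = K \<Longrightarrow> g \<in> Gamma X K"
  using Gam_iff by blast

lemma hgt_SS: "g \<in> Gamma X (Suc (Suc i)) \<Longrightarrow> \<exists>l c r. g = Tri l c r \<and> l \<in> Gamma X (Suc i) \<and> c \<in> Gamma X i \<and> r \<in> Gamma X (Suc i)"
  by auto

lemma hgt_lt1: "set A \<subseteq> Gam X - {One} \<Longrightarrow> \<forall>a\<in>set A. hgt a < 1 \<Longrightarrow> A = []"
proof (rule ccontr)
  assume A: "set A \<subseteq> Gam X - {One}" "\<forall>a\<in>set A. hgt a < 1" and ne: "A \<noteq> []"
  then obtain a where a: "a \<in> set A" by (cases A) auto
  then have "hgt a \<ge> 1" using A hgt_pos[of a] by auto
  then show False using A a by auto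
qed

lemma seg:
  assumes K: "K \<ge> 1" and H: "K \<ge> 2 \<longrightarrow> Gen (K - 1)" and g: "g \<in> Gamma X K" and h: "h \<in> Gamma X K"
    and A: "set A \<subseteq> Gam X - {One}" "\<forall>a\<in>set A. hgt a < K"
  shows "\<exists>w. zig K w \<and> hd w = g \<and> last w = h \<and> F (g # A @ [h]) = F w"
proof (cases "K = 1")
  case True
  then have A0: "A = []" using hgt_lt1 A by auto
  have "zig K [h]" using h by (rule zig.single)
  moreover have "One \<in> {gl g, gr g}" "One \<in> {gl (hd [h]), gr (hd [h])}" using g h True by auto
  ultimately show ?thesis using zcons[OF \<open>zig K [h]\<close> g] A0 by (intro exI[of _ "zcons g One [h]"]) auto
next
  case False
  then obtain i where Ki: "K = Suc (Suc i)" using K by (metis One_nat_def Suc_le_D le_SucE)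
  obtain lg cg rg where gt: "g = Tri lg cg rg" "lg \<in> Gamma X (Suc i)" "cg \<in> Gamma X i" "rg \<in> Gamma X (Suc i)"
    using hgt_SS g Ki by blast
  obtain lh ch rh where ht: "h = Tri lh ch rh" "lh \<in> Gamma X (Suc i)" "ch \<in> Gamma X i" "rh \<in> Gamma X (Suc i)"
    using hgt_SS h Ki by blast
  have rgO: "rg \<noteq> One" and lhO: "lh \<noteq> One" using hgt_Gamma[OF gt(4)] hgt_Gamma[OF ht(2)] by auto
  define mid where "mid = filter (\<lambda>x. x \<noteq> One) (rg # cg # A @ [ch, lh])"
  have hdm: "hd mid = rg" unfolding mid_def using rgO by simp
  have lastm: "last mid = lh" unfolding mid_def using lhO by simp
  have wdm: "wd (Suc i) mid"
  proof -
    have hs: "hgt rg = Suc i" "hgt cg = i" "hgt ch = i" "hgt lh = Suc i"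
      using hgt_Gamma gt ht by blast+
    have "set mid \<subseteq> Gam X - {One}" unfolding mid_def using A gt ht Gamma_Gam by auto
    moreover have "\<forall>x\<in>set mid. hgt x \<le> Suc i" unfolding mid_def using A(2) hs Ki by auto
    moreover have "rg \<in> set mid" unfolding mid_def using rgO by simp
    ultimately show ?thesis unfolding wd_def using hs by auto
  qed
  have G: "Gen (Suc i)" using H Ki by simp
  obtain L w' R where LwR: "zig (Suc i) w'" "F mid = L * F w' * R"
    "hgt (hd mid) = Suc i \<longrightarrow> L = 1 \<and> hd w' = hd mid" "hgt (last mid) = Suc i \<longrightarrow> R = 1 \<and> last w' = last mid"
    using G wdm unfolding Gen_def by blast
  have L1: "L = 1" "hd w' = rg" using LwR(3) hdm gt hgt_Gamma by auto
  have R1: "R = 1" "last w' = lh" using LwR(4) lastm ht hgt_Gamma by auto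
  have Fm: "F mid = F w'" using LwR(2) L1 R1 by simp
  have gG: "g \<in> Gam X" and hG: "h \<in> Gam X" using g h Gamma_Gam by auto
  have "F (g # A @ [h]) = f g * F A * f h" by (simp add: mult.assoc)
  also have "\<dots> = f g * f rg * f cg * F A * (f ch * f lh * f h)"
    using tri_ids(3)[of lg cg rg] tri_ids(4)[of lh ch rh] gt ht gG hG by simp
  also have "\<dots> = f g * F mid * f h" unfolding mid_def F_filter by (simp add: mult.assoc)
  finally have Fgh: "F (g # A @ [h]) = f g * F w' * f h" using Fm by simp
  show ?thesis
  proof (cases "length w' \<ge> 3")
    case False
    then have w': "w' = [rg]" using zig_short[OF LwR(1)] L1 by metis
    then have "rg = lh" using R1 by simp
    have "zig K [h]" using h by (rule zig.single)
    moreover have "rg \<in> {gl g, gr g}" "rg \<in> {gl (hd [h]), gr (hd [h])}" using gt ht \<open>rg = lh\<close> by auto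
    ultimately show ?thesis using zcons[OF \<open>zig K [h]\<close> g] Fgh w' by (intro exI[of _ "zcons g rg [h]"]) auto
  next
    case True
    note LS = lift_simple[OF LwR(1) True]
    define Lf where "Lf = lift w'"
    have zLf: "zig K Lf" using LS Ki Lf_def by simp
    obtain cp yp where lLf: "last Lf = Tri lh cp yp" using LS R1 Lf_def by auto
    have hLf: "gr (hd Lf) = rg" using LS L1 Lf_def by simp
    have Fw': "F w' = f rg * F Lf * f lh" using LS L1 R1 Lf_def by simp
    obtain w'' where w'': "zig K w''" "hd w'' = hd Lf" "last w'' = h" "F w'' = F Lf * f lh * f h"
      using zsnoc[OF zLf h, of lh] lLf ht by auto
    have "rg \<in> {gl g, gr g}" "rg \<in> {gl (hd w''), gr (hd w'')}" using gt w''(2) hLf by auto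
    then have zc: "zig K (zcons g rg w'') \<and> hd (zcons g rg w'') = g \<and> last (zcons g rg w'') = last w''
         \<and> F (zcons g rg w'') = f g * f rg * F w''" using zcons[OF w''(1) g] by blast
    have "F (g # A @ [h]) = F (zcons g rg w'')" using zc w''(4) Fgh Fw' by (simp add: mult.assoc)
    then show ?thesis using zc w''(3) by (intro exI[of _ "zcons g rg w''"]) auto
  qed
qed


lemma lft:
  assumes K: "K \<ge> 1" and H: "K \<ge> 2 \<longrightarrow> Gen (K - 1)" and g: "g \<in> Gamma X K"
    and A: "set A \<subseteq> Gam X - {One}" "\<forall>a\<in>set A. hgt a < K"
  shows "\<exists>L w. zig K w \<and> last w = g \<and> F (A @ [g]) = L * F w \<and> GL L (f (hd w)) \<and> (A = [] \<longrightarrow> L = 1 \<and> hd w = g)"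
proof (cases "A = []")
  case True
  have "zig K [g]" using g by (rule zig.single)
  then show ?thesis using True GL_1 by (intro exI[of _ 1] exI[of _ "[g]"]) simp
next
  case False
  note Ane = False
  then have "K \<noteq> 1" using hgt_lt1 A by auto
  then obtain i where Ki: "K = Suc (Suc i)" using K by (metis One_nat_def Suc_le_D le_SucE)
  obtain l c r where gt: "g = Tri l c r" "l \<in> Gamma X (Suc i)" "c \<in> Gamma X i" "r \<in> Gamma X (Suc i)"
    using hgt_SS g Ki by blast
  have hs: "hgt l = Suc i" "hgt c = i" using hgt_Gamma gt by blast+
  have lO: "l \<noteq> One" using hs by auto
  define u' where "u' = filter (\<lambda>x. x \<noteq> One) (A @ [c, l])"
  have lastu: "last u' = l" unfolding u'_def using lO by simp
  have wdu: "wd (Suc i) u'"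
  proof -
    have "set u' \<subseteq> Gam X - {One}" unfolding u'_def using A gt Gamma_Gam by auto
    moreover have "\<forall>x\<in>set u'. hgt x \<le> Suc i" unfolding u'_def using A(2) hs Ki by auto
    moreover have "l \<in> set u'" unfolding u'_def using lO by simp
    ultimately show ?thesis unfolding wd_def using hs by auto
  qed
  have G: "Gen (Suc i)" using H Ki by simp
  obtain L' w' R' where LwR: "zig (Suc i) w'" "F u' = L' * F w' * R'" "GL L' (f (hd w'))"
    "hgt (last u') = Suc i \<longrightarrow> R' = 1 \<and> last w' = last u'"
    using G wdu unfolding Gen_def by blast
  have R1: "R' = 1" "last w' = l" using LwR(4) lastu hs by auto
  have gG: "g \<in> Gam X" using g Gamma_Gam by auto
  have "F (A @ [g]) = F A * (f c * f l * f g)" using tri_ids(4)[of l c r] gt gG by simp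
  also have "\<dots> = F u' * f g" unfolding u'_def F_filter by (simp add: mult.assoc)
  finally have FAg: "F (A @ [g]) = L' * F w' * f g" using LwR(2) R1 by simp
  show ?thesis
  proof (cases "length w' \<ge> 3")
    case False
    then have w': "w' = [l]" using zig_short[OF LwR(1)] R1 by (metis last_ConsL)
    have "zig K [g]" using g by (rule zig.single)
    have lc: "l \<in> {gl g, gr g}" using gt by simp
    have lG: "l \<in> Gam X" using gt Gamma_Gam by blast
    have "GL (L' * f l) (f g)"
    proof (rule GL_comp[OF _ f_child[OF gG lc] _ T1_f[OF gG]])
      show "GL L' (f l)" using LwR(3) w' by simp
      show "f l * f l * f g = f l * f g" using f_idem[OF lG] by simp
    qed
    moreover have "F (A @ [g]) = (L' * f l) * F [g]" using FAg w' by (simp add: mult.assoc)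
    ultimately show ?thesis using \<open>zig K [g]\<close> Ane by (intro exI[of _ "L' * f l"] exI[of _ "[g]"]) simp
  next
    case True
    note LS = lift_simple[OF LwR(1) True]
    define Lf where "Lf = lift w'"
    have zLf: "zig K Lf" using LS Ki Lf_def by simp
    obtain cp yp where lLf: "last Lf = Tri l cp yp" using LS R1 Lf_def by auto
    have hLf: "gr (hd Lf) = hd w'" using LS Lf_def by simp
    have hLfG: "hd Lf \<in> Gam X" using zig_basic[OF zLf] Gamma_Gam by blast
    have y1G: "hd w' \<in> Gam X" using zig_basic[OF LwR(1)] Gamma_Gam by blast
    have Fw': "F w' = f (hd w') * F Lf * f l" using LS R1 Lf_def by simp
    obtain w'' where w'': "zig K w''" "hd w'' = hd Lf" "last w'' = g" "F w'' = F Lf * f l * f g"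
      using zsnoc[OF zLf g, of l] lLf gt by auto
    have "GL (L' * f (hd w')) (f (hd Lf))"
      using GL_comp[OF LwR(3) f_child[OF hLfG, of "hd w'"] _ T1_f[OF hLfG]] hLf f_idem[OF y1G]
      by (simp add: mult.assoc)
    moreover have "F (A @ [g]) = (L' * f (hd w')) * F w''" using FAg Fw' w''(4) by (simp add: mult.assoc)
    ultimately show ?thesis using w'' Ane by (intro exI[of _ "L' * f (hd w')"] exI[of _ w'']) simp
  qed
qed

lemma rgt:
  assumes K: "K \<ge> 1" and H: "K \<ge> 2 \<longrightarrow> Gen (K - 1)" and g: "g \<in> Gamma X K"
    and C: "set C \<subseteq> Gam X - {One}" "\<forall>a\<in>set C. hgt a < K"
  shows "\<exists>w R. zig K w \<and> hd w = g \<and> F (g # C) = F w * R \<and> GR R (f (last w)) \<and> (C = [] \<longrightarrow> R = 1 \<and> last w = g)"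
proof (cases "C = []")
  case True
  have "zig K [g]" using g by (rule zig.single)
  then show ?thesis using True GR_1 by (intro exI[of _ "[g]"] exI[of _ 1]) simp
next
  case False
  note Ane = False
  then have "K \<noteq> 1" using hgt_lt1 C by auto
  then obtain i where Ki: "K = Suc (Suc i)" using K by (metis One_nat_def Suc_le_D le_SucE)
  obtain l c r where gt: "g = Tri l c r" "l \<in> Gamma X (Suc i)" "c \<in> Gamma X i" "r \<in> Gamma X (Suc i)"
    using hgt_SS g Ki by blast
  have hs: "hgt r = Suc i" "hgt c = i" using hgt_Gamma gt by blast+
  have rO: "r \<noteq> One" using hs by auto
  define u' where "u' = filter (\<lambda>x. x \<noteq> One) (r # c # C)"
  have hdu: "hd u' = r" unfolding u'_def using rO by simp
  have wdu: "wd (Suc i) u'"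
  proof -
    have "set u' \<subseteq> Gam X - {One}" unfolding u'_def using C gt Gamma_Gam by auto
    moreover have "\<forall>x\<in>set u'. hgt x \<le> Suc i" unfolding u'_def using C(2) hs Ki by auto
    moreover have "r \<in> set u'" unfolding u'_def using rO by simp
    ultimately show ?thesis unfolding wd_def using hs by auto
  qed
  have G: "Gen (Suc i)" using H Ki by simp
  obtain L' w' R' where LwR: "zig (Suc i) w'" "F u' = L' * F w' * R'" "GR R' (f (last w'))"
    "hgt (hd u') = Suc i \<longrightarrow> L' = 1 \<and> hd w' = hd u'"
    using G wdu unfolding Gen_def by blast
  have L1: "L' = 1" "hd w' = r" using LwR(4) hdu hs by auto
  have gG: "g \<in> Gam X" using g Gamma_Gam by auto
  have "F (g # C) = (f g * f r * f c) * F C" using tri_ids(3)[of l c r] gt gG by simp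
  also have "\<dots> = f g * F u'" unfolding u'_def F_filter by (simp add: mult.assoc)
  finally have FgC: "F (g # C) = f g * F w' * R'" using LwR(2) L1 by (simp add: mult.assoc)
  show ?thesis
  proof (cases "length w' \<ge> 3")
    case False
    then have w': "w' = [r]" using zig_short[OF LwR(1)] L1 by metis
    have "zig K [g]" using g by (rule zig.single)
    have rc: "r \<in> {gl g, gr g}" using gt by simp
    have rG: "r \<in> Gam X" using gt Gamma_Gam by blast
    have "GR (f r * R') (f g)"
    proof (rule GR_comp[OF _ f_child[OF gG rc] _ T1_f[OF gG]])
      show "GR R' (f r)" using LwR(3) w' by simp
      show "f g * f r * f r = f g * f r" using f_idem[OF rG] by (simp add: mult.assoc)
    qed
    moreover have "F (g # C) = F [g] * (f r * R')" using FgC w' by (simp add: mult.assoc)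
    ultimately show ?thesis using \<open>zig K [g]\<close> Ane by (intro exI[of _ "[g]"] exI[of _ "f r * R'"]) simp
  next
    case True
    note LS = lift_simple[OF LwR(1) True]
    define Lf where "Lf = lift w'"
    have zLf: "zig K Lf" using LS Ki Lf_def by simp
    obtain cp yp where lLf: "last Lf = Tri (last w') cp yp" using LS Lf_def by auto
    have hLf: "gr (hd Lf) = r" using LS Lf_def L1 by simp
    have lLfG: "last Lf \<in> Gam X" using zig_basic[OF zLf] Gamma_Gam by blast
    have ylG: "last w' \<in> Gam X" using zig_basic[OF LwR(1)] Gamma_Gam by blast
    have Fw': "F w' = f r * F Lf * f (last w')" using LS L1 Lf_def by simp
    have "r \<in> {gl g, gr g}" "r \<in> {gl (hd Lf), gr (hd Lf)}" using gt hLf by auto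
    then have zc: "zig K (zcons g r Lf) \<and> hd (zcons g r Lf) = g \<and> last (zcons g r Lf) = last Lf
         \<and> F (zcons g r Lf) = f g * f r * F Lf" using zcons[OF zLf g] by blast
    have lc: "last w' \<in> {gl (last Lf), gr (last Lf)}" using lLf by simp
    have "GR (f (last w') * R') (f (last Lf))"
      using GR_comp[OF LwR(3) f_child[OF lLfG lc] _ T1_f[OF lLfG]] f_idem[OF ylG]
      by (simp add: mult.assoc)
    moreover have "F (g # C) = F (zcons g r Lf) * (f (last w') * R')" using FgC Fw' zc by (simp add: mult.assoc)
    ultimately show ?thesis using zc Ane by (intro exI[of _ "zcons g r Lf"] exI[of _ "f (last w') * R'"]) simp
  qed
qed


lemma F_hd_idem: "u \<noteq> [] \<Longrightarrow> set u \<subseteq> Gam X \<Longrightarrow> f (hd u) * F u = F u"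
proof -
  assume "u \<noteq> []" "set u \<subseteq> Gam X"
  then obtain a v where u: "u = a # v" "a \<in> Gam X" by (cases u) auto
  then show ?thesis using f_idem[OF u(2)] by (simp add: mult.assoc[symmetric])
qed

lemma F_last_idem: "u \<noteq> [] \<Longrightarrow> set u \<subseteq> Gam X \<Longrightarrow> F u * f (last u) = F u"
proof -
  assume "u \<noteq> []" "set u \<subseteq> Gam X"
  then obtain a v where u: "u = v @ [a]" "a \<in> Gam X" by (cases u rule: rev_cases) auto
  then show ?thesis using f_idem[OF u(2)] by (simp add: mult.assoc)
qed

lemma core:
  assumes K: "K \<ge> 1" and H: "K \<ge> 2 \<longrightarrow> Gen (K - 1)"
  shows "u \<noteq> [] \<Longrightarrow> set u \<subseteq> Gam X - {One} \<Longrightarrow> \<forall>x\<in>set u. hgt x \<le> K \<Longrightarrow> hgt (hd u) = K \<Longrightarrow> hgt (last u) = K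
    \<Longrightarrow> \<exists>w. zig K w \<and> hd w = hd u \<and> last w = last u \<and> F u = F w"
proof (induction "length u" arbitrary: u rule: less_induct)
  case less
  obtain g rest where u: "u = g # rest" using less.prems(1) by (cases u) auto
  have gK: "g \<in> Gamma X K" using less.prems u Gam_hgt by auto
  show ?case
  proof (cases "rest = []")
    case True
    have "zig K [g]" using gK by (rule zig.single)
    then show ?thesis using u True by (intro exI[of _ "[g]"]) simp
  next
    case False
    define P where "P = (\<lambda>x::'a gam. hgt x < K)"
    define A where "A = takeWhile P rest"
    define B where "B = dropWhile P rest"
    have rAB: "rest = A @ B" unfolding A_def B_def by simp
    have lastr: "last rest = last u" using u False by simp
    have Bne: "B \<noteq> []"
    proof
      assume "B = []"
      then have "\<forall>x\<in>set rest. P x" unfolding B_def by (simp add: dropWhile_eq_Nil_conv)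
      then have "P (last rest)" using False by simp
      then show False using lastr less.prems(5) unfolding P_def by simp
    qed
    have nP: "\<not> P (hd B)" unfolding B_def using Bne B_def hd_dropWhile by metis
    have Bsub: "set B \<subseteq> set u" using rAB u by auto
    have hB: "hgt (hd B) = K" using nP less.prems(3) Bsub Bne unfolding P_def by (meson hd_in_set le_neq_implies_less subsetD)
    have hK: "hd B \<in> Gamma X K" using hB Bsub Bne less.prems(2) Gam_hgt by (meson DiffD1 hd_in_set subsetD)
    have Aset: "set A \<subseteq> Gam X - {One}" "\<forall>a\<in>set A. hgt a < K"
      using less.prems(2) u rAB unfolding A_def P_def by (auto dest: set_takeWhileD)
    obtain w1 where w1: "zig K w1" "hd w1 = g" "last w1 = hd B" "F (g # A @ [hd B]) = F w1"
      using seg[OF K H gK hK Aset] by blast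
    have lastB: "last B = last u" using lastr rAB Bne by simp
    have "length B < length u" using u rAB by simp
    moreover have "set B \<subseteq> Gam X - {One}" "\<forall>x\<in>set B. hgt x \<le> K" using Bsub less.prems by auto
    ultimately obtain w2 where w2: "zig K w2" "hd w2 = hd B" "last w2 = last B" "F B = F w2"
      using less.hyps[of B] Bne hB lastB less.prems(5) by auto
    note J = zjoin[OF w1(1) w2(1)] w1(3) w2(2)
    have FB: "f (hd B) * F B = F B" using F_hd_idem Bne \<open>set B \<subseteq> Gam X - {One}\<close> by blast
    have "F u = f g * F A * F B" unfolding u rAB by (simp add: mult.assoc)
    also have "\<dots> = F (g # A @ [hd B]) * F B" using FB by (simp add: mult.assoc)
    finally have "F u = F (zjoin w1 w2)" using J w1(4) w2(4) by simp
    then show ?thesis using J w1 w2 u lastB by (intro exI[of _ "zjoin w1 w2"]) auto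
  qed
qed


lemma gen_step:
  assumes K: "K \<ge> 1" and H: "K \<ge> 2 \<longrightarrow> Gen (K - 1)"
  shows "Gen K"
  unfolding Gen_def
proof (intro allI impI)
  fix u assume wu: "wd K u"
  have une: "u \<noteq> []" and uset: "set u \<subseteq> Gam X - {One}" and uh: "\<forall>g\<in>set u. hgt g \<le> K"
    and ex: "\<exists>g\<in>set u. hgt g = K" using wu unfolding wd_def by auto
  define P where "P = (\<lambda>x::'a gam. hgt x < K)"
  define A where "A = takeWhile P u"
  define u1 where "u1 = dropWhile P u"
  have uA: "u = A @ u1" unfolding A_def u1_def by simp
  have u1ne: "u1 \<noteq> []"
  proof
    assume "u1 = []"
    then have "\<forall>x\<in>set u. P x" unfolding u1_def by (simp add: dropWhile_eq_Nil_conv)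
    then show False using ex unfolding P_def by auto
  qed
  define g where "g = hd u1"
  have u1sub: "set u1 \<subseteq> set u" using uA by auto
  have gnP: "\<not> P g" unfolding g_def u1_def using u1ne u1_def hd_dropWhile by metis
  have gin: "g \<in> set u" using u1ne u1sub g_def by auto
  have gK: "g \<in> Gamma X K"
  proof -
    have "hgt g = K" using gnP gin uh unfolding P_def by force
    moreover have "g \<in> Gam X" using gin uset by auto
    ultimately show ?thesis using Gam_hgt by blast
  qed
  define rv where "rv = rev u1"
  define C' where "C' = takeWhile P rv"
  define D where "D = dropWhile P rv"
  have rvCD: "rv = C' @ D" unfolding C'_def D_def by simp
  have Dne: "D \<noteq> []"
  proof
    assume "D = []"
    then have "\<forall>x\<in>set rv. P x" unfolding D_def by (simp add: dropWhile_eq_Nil_conv)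
    then show False using gnP u1ne unfolding rv_def g_def by simp
  qed
  define core where "core = rev D"
  define C where "C = rev C'"
  have u1c: "u1 = core @ C" unfolding core_def C_def using rvCD rv_def by (metis rev_append rev_rev_ident)
  have cne: "core \<noteq> []" using Dne core_def by simp
  have hdc: "hd core = g" using u1c cne g_def by simp
  define h where "h = last core"
  have hnP: "\<not> P h" unfolding h_def core_def last_rev D_def using Dne D_def hd_dropWhile by metis
  have csub: "set core \<subseteq> set u" using u1c u1sub by auto
  have hin: "h \<in> set u" using cne csub h_def by auto
  have hK: "h \<in> Gamma X K"
  proof -
    have "hgt h = K" using hnP hin uh unfolding P_def by force
    moreover have "h \<in> Gam X" using hin uset by auto
    ultimately show ?thesis using Gam_hgt by blast
  qed
  have Aset: "set A \<subseteq> Gam X - {One}" "\<forall>a\<in>set A. hgt a < K"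
    using uset unfolding A_def P_def by (auto dest: set_takeWhileD)
  have Cset: "set C \<subseteq> Gam X - {One}" "\<forall>a\<in>set C. hgt a < K"
  proof -
    have "set C \<subseteq> set u" using u1c u1sub by auto
    moreover have "\<forall>a\<in>set C. P a" unfolding C_def C'_def by (auto dest: set_takeWhileD)
    ultimately show "set C \<subseteq> Gam X - {One}" "\<forall>a\<in>set C. hgt a < K" using uset unfolding P_def by auto
  qed
  obtain L w1 where w1: "zig K w1" "last w1 = g" "F (A @ [g]) = L * F w1" "GL L (f (hd w1))"
    "A = [] \<longrightarrow> L = 1 \<and> hd w1 = g"
    using lft[OF K H gK Aset] by blast
  obtain w2 where w2: "zig K w2" "hd w2 = g" "last w2 = h" "F core = F w2"
  proof -
    have "set core \<subseteq> Gam X - {One}" using csub uset by auto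
    moreover have "\<forall>x\<in>set core. hgt x \<le> K" using csub uh by auto
    moreover have "hgt (hd core) = K" using hdc gK hgt_Gamma by blast
    moreover have "hgt (last core) = K" using h_def hK hgt_Gamma by blast
    ultimately obtain w where "zig K w" "hd w = hd core" "last w = last core" "F core = F w"
      using core[OF K H cne] by blast
    then show ?thesis using that hdc h_def by blast
  qed
  obtain w3 R where w3: "zig K w3" "hd w3 = h" "F (h # C) = F w3 * R" "GR R (f (last w3))"
    "C = [] \<longrightarrow> R = 1 \<and> last w3 = h"
    using rgt[OF K H hK Cset] by blast
  note J1 = zjoin[OF w1(1) w2(1)] w1(2) w2(2)
  have J1': "zig K (zjoin w1 w2)" "F (zjoin w1 w2) = F w1 * F w2" "hd (zjoin w1 w2) = hd w1" "last (zjoin w1 w2) = h"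
    using J1 w2(3) by auto
  note J2 = zjoin[OF J1'(1) w3(1)] J1'(4) w3(2)
  define w where "w = zjoin (zjoin w1 w2) w3"
  have wp: "zig K w" "F w = F w1 * F w2 * F w3" "hd w = hd w1" "last w = last w3"
    using J2 J1' unfolding w_def by auto
  have cG: "set core \<subseteq> Gam X" using csub uset by auto
  have Fc1: "f g * F core = F core" using F_hd_idem[OF cne cG] hdc by simp
  have Fc2: "F core * f h = F core" using F_last_idem[OF cne cG] h_def by simp
  have "F u = F A * F core * F C" unfolding uA u1c by (simp add: mult.assoc)
  also have "\<dots> = F A * (f g * F core * f h) * F C" using Fc1 Fc2 by simp
  also have "\<dots> = F (A @ [g]) * F core * F (h # C)" by (simp add: mult.assoc)
  also have "\<dots> = L * F w * R" using w1(3) w3(3) w2(4) wp(2) by (simp add: mult.assoc)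
  finally have Fu: "F u = L * F w * R" .
  have ex1: "hgt (hd u) = K \<longrightarrow> L = 1 \<and> hd w = hd u"
  proof
    assume "hgt (hd u) = K"
    then have "A = []" unfolding A_def P_def using une by (cases u) auto
    then show "L = 1 \<and> hd w = hd u" using w1(5) wp(3) uA hdc g_def by simp
  qed
  have ex2: "hgt (last u) = K \<longrightarrow> R = 1 \<and> last w = last u"
  proof
    assume a: "hgt (last u) = K"
    have "last u = last u1" using uA u1ne by simp
    then have "hd rv = last u" unfolding rv_def using u1ne by (simp add: hd_rev)
    moreover have "rv \<noteq> []" using u1ne rv_def by simp
    ultimately have "\<not> P (hd rv)" using a unfolding P_def by simp
    then have "C' = []" unfolding C'_def using \<open>rv \<noteq> []\<close> by (cases rv) auto
    then have "C = []" unfolding C_def by simp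
    then show "R = 1 \<and> last w = last u" using w3(5) wp(4) \<open>last u = last u1\<close> u1c h_def by simp
  qed
  show "\<exists>L w R. zig K w \<and> F u = L * F w * R \<and> GL L (f (hd w)) \<and> GR R (f (last w))
      \<and> (hgt (hd u) = K \<longrightarrow> L = 1 \<and> hd w = hd u) \<and> (hgt (last u) = K \<longrightarrow> R = 1 \<and> last w = last u)"
    using wp Fu w1(4) w3(4) ex1 ex2 by (intro exI[of _ L] exI[of _ w] exI[of _ R]) simp
qed

lemma Gen_all: "K \<ge> 1 \<Longrightarrow> Gen K"
proof (induction K)
  case 0 then show ?case by simp
next
  case (Suc K)
  show ?case
  proof (rule gen_step)
    show "Suc K \<ge> 1" by simp
    show "Suc K \<ge> 2 \<longrightarrow> Gen (Suc K - 1)" using Suc by auto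
  qed
qed

lemma regular_all': "set u \<subseteq> Gam X \<Longrightarrow> regT (F u)"
proof -
  assume uG: "set u \<subseteq> Gam X"
  define u' where "u' = filter (\<lambda>x. x \<noteq> One) u"
  have Fu: "F u' = F u" unfolding u'_def by (rule F_filter)
  show ?thesis
  proof (cases "u' = []")
    case True
    have "F [] \<in> T1" unfolding T1_def by (rule CollectI, rule exI[of _ "[]"]) simp
    then have "regT 1" unfolding regT_def by (intro bexI[of _ 1]) auto
    then show ?thesis using Fu True by simp
  next
    case False
    define K where "K = Max (hgt ` set u')"
    have u'G: "set u' \<subseteq> Gam X - {One}" using uG unfolding u'_def by auto
    have fin: "finite (hgt ` set u')" by simp
    have ne: "hgt ` set u' \<noteq> {}" using False by simp
    have Kin: "K \<in> hgt ` set u'" unfolding K_def using Max_in[OF fin ne] .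
    have Kle: "\<forall>g\<in>set u'. hgt g \<le> K" unfolding K_def using fin by simp
    obtain g0 where g0: "g0 \<in> set u'" "hgt g0 = K" using Kin by auto
    have K1: "K \<ge> 1" using g0 u'G hgt_pos by auto
    have wdu: "wd K u'" unfolding wd_def using False u'G Kle g0 by auto
    obtain L w R where LwR: "zig K w" "F u' = L * F w * R" "GL L (f (hd w))" "GR R (f (last w))"
      using Gen_all[OF K1] wdu unfolding Gen_def by blast
    note zb = zig_basic[OF LwR(1)]
    have "regT (F w)" using row_reg[OF LwR(1)] .
    then have r1: "regT (F w * R)" using LwR(4) zb unfolding GR_def by blast
    have "f (hd w) * (F w * R) = F w * R" using zb by (simp add: mult.assoc[symmetric])
    then have "regT (L * (F w * R))" using LwR(3) r1 unfolding GL_def by blast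
    then show ?thesis using Fu LwR(2) by (simp add: mult.assoc)
  qed
qed

end
theorem proposition5p5:
  fixes X :: "'a set" and \<phi> :: "'a \<Rightarrow> 's::semigroup_mult"
  assumes "X \<noteq> {}"
    and "regular_semigroup TYPE('s)"
    and "inj_on \<phi> X"
    and "\<phi> ` X \<subseteq> idempotents"
    and "\<And>T. regular_subsemigroup T \<Longrightarrow> \<phi> ` X \<subseteq> T \<Longrightarrow> T = UNIV"
  shows "\<exists>\<psi> :: 'a gam list set \<Rightarrow> 's.
           (\<forall>A\<in>FT X. \<forall>B\<in>FT X. \<psi> (ft_mult X A B) = \<psi> A * \<psi> B)
         \<and> \<psi> ` FT X = UNIV
         \<and> (\<forall>x\<in>X. \<psi> (cls X [Leaf x]) = \<phi> x)"
proof -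
  interpret ctx X \<phi> using assms(2,4) by unfold_locales
  have leaf: "cls X [Leaf x] \<in> FT X \<and> psi (cls X [Leaf x]) = \<phi> x" if "x \<in> X" for x
    using cls_props[of "[Leaf x]"] that by (simp add: Gplus_def)
  define T where "T = psi ` FT X"
  have "regular_subsemigroup T"
    unfolding regular_subsemigroup_def
  proof (intro conjI ballI)
    show "T \<noteq> {}" using leaf assms(1) unfolding T_def by blast
  next
    fix a b assume "a \<in> T" "b \<in> T"
    then obtain A B where "A \<in> FT X" "B \<in> FT X" "a = psi A" "b = psi B" unfolding T_def by blast
    then show "a * b \<in> T" using hom unfolding T_def by (metis image_eqI)
  next
    fix a assume "a \<in> T"
    then obtain A where A: "A \<in> FT X" "a = psi A" unfolding T_def by blast
    then obtain u where u: "u \<in> Gplus X" "A = cls X u" "F u \<noteq> None" using FT_elim by blast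
    have pa: "psi A = the (F u)" using cls_props[OF u(1,3)] u(2) by simp
    then have Fu: "F u = Some a" using u(3) A(2) by auto
    obtain v where v: "v \<in> T1" "F u * v * F u = F u"
      using regular_all'[of u] u(1) unfolding regT_def Gplus_def by auto
    obtain w where w: "v = F w" "set w \<subseteq> Gam X" using v(1) unfolding T1_def by auto
    show "\<exists>b\<in>T. a * b * a = a"
    proof (cases "F w")
      case None
      then have "a * a = a" using v(2) w(1) Fu by simp
      then have "a * a * a = a" by simp
      then show ?thesis using A unfolding T_def by blast
    next
      case (Some b)
      have wG: "w \<in> Gplus X" using w Some unfolding Gplus_def by auto
      have "cls X w \<in> FT X" "psi (cls X w) = b" using cls_props[OF wG] Some by auto
      moreover have "a * b * a = a" using v(2) w(1) Fu Some by simp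
      ultimately show ?thesis unfolding T_def by (metis image_eqI)
    qed
  qed
  moreover have "\<phi> ` X \<subseteq> T" using leaf unfolding T_def by (metis image_eqI image_subsetI)
  ultimately have TU: "T = UNIV" using assms(5) by blast
  show ?thesis
    by (rule exI[of _ psi]) (use hom leaf TU in \<open>auto simp: T_def\<close>)
qed


end
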